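(* Let $m\ge 2$ and $1\le k\le m$. For $y\in\mathcal{Y}$ and $g\in\mathbb{R}^m$ define the truncated top-$k$ entropy loss $$L(y,g)=\log\Big(1+\sum_{j\in\mathcal{J}_y(g)}\exp(g_j-g_y)\Big),$$ where $\mathcal{J}_y(g)$ is a set of indices of $m-k$ smallest components of $(g_j)_{j\ne y}$ (the value of $L$ does not depend on how ties are broken). Then $L$ is top-$s$ calibrated for every $s$ with $k\le s\le m$.
   Context: Classes $\mathcal{Y}=\{1,\dots,m\}$. Top-$s$ error: $\mathrm{err}_s(y,g)=1$ if $|\{j\ne y: g_j\ge g_y\}|\ge s$ and $0$ otherwise. A loss $L:\mathcal{Y}\times\mathbb{R}^m\to\mathbb{R}$ is top-$s$ calibrated if for every probability vector $p\in\mathbb{R}^m$ with pairwise distinct coordinates, $\arg\min_{g\in\mathbb{R}^m}\sum_y p_y L(y,g)\subseteq\arg\min_{g\in\mathbb{R}^m}\sum_y p_y\,\mathrm{err}_s(y,g)$ (the left set may be empty). For $k=1$ the loss is the softmax loss. *)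

theory Defs
  imports Complex_Main
begin

text \<open>Classes are the elements of a finite type 'y, with m = CARD('y).
  Score vectors are functions g :: 'y \<Rightarrow> real.\<close>

definition top_err :: "nat \<Rightarrow> 'y::finite \<Rightarrow> ('y \<Rightarrow> real) \<Rightarrow> real" where
  "top_err s y g = (if card {j. j \<noteq> y \<and> g j \<ge> g y} \<ge> s then 1 else 0)"

definition smallest_set :: "nat \<Rightarrow> 'y::finite \<Rightarrow> ('y \<Rightarrow> real) \<Rightarrow> 'y set \<Rightarrow> bool" where
  "smallest_set k y g J \<longleftrightarrow> y \<notin> J \<and> card J = card (UNIV :: 'y set) - k \<and>
     (\<forall>j\<in>J. \<forall>i. i \<noteq> y \<longrightarrow> i \<notin> J \<longrightarrow> g j \<le> g i)"

definition trunc_topk_loss :: "nat \<Rightarrow> 'y::finite \<Rightarrow> ('y \<Rightarrow> real) \<Rightarrow> real" where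
  "trunc_topk_loss k y g =
     ln (1 + (\<Sum>j\<in>(SOME J. smallest_set k y g J). exp (g j - g y)))"

definition argmins :: "('a \<Rightarrow> real) \<Rightarrow> 'a set" where
  "argmins f = {x. \<forall>x'. f x \<le> f x'}"

definition top_calibrated :: "nat \<Rightarrow> ('y::finite \<Rightarrow> ('y \<Rightarrow> real) \<Rightarrow> real) \<Rightarrow> bool" where
  "top_calibrated s L \<longleftrightarrow>
     (\<forall>p :: 'y \<Rightarrow> real. (\<forall>y. p y \<ge> 0) \<and> sum p UNIV = 1 \<and> inj p \<longrightarrow>
        argmins (\<lambda>g. \<Sum>y\<in>UNIV. p y * L y g)
          \<subseteq> argmins (\<lambda>g. \<Sum>y\<in>UNIV. p y * top_err s y g))"

end

theory Submission
  imports Defs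
begin


lemma exch_sum:
  fixes f :: "'a \<Rightarrow> real"
  assumes "finite A" "finite B" "card A = card B"
    and "\<And>a b. a \<in> A - B \<Longrightarrow> b \<in> B - A \<Longrightarrow> f a \<le> f b"
  shows "sum f A \<le> sum f B"
proof -
  have cA: "card (A - B) = card (B - A)"
  proof -
    have "card (A - B) = card A - card (A \<inter> B)" using assms(1) by (simp add: card_Diff_subset_Int)
    moreover have "card (B - A) = card B - card (A \<inter> B)"
      using card_Diff_subset_Int[of B A] assms(2) by (simp add: inf_commute)
    ultimately show ?thesis using assms(3) by simp
  qed
  have sA: "sum f A = sum f (A \<inter> B) + sum f (A - B)"
    using sum.Int_Diff[OF assms(1), of f B] .
  have sB: "sum f B = sum f (A \<inter> B) + sum f (B - A)"
    using sum.Int_Diff[OF assms(2), of f A] Int_commute[of A B] by (simp only:)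
  show ?thesis
  proof (cases "A - B = {}")
    case True
    have "card (B - A) = card (A - B)" using cA by (rule sym)
    then have "card (B - A) = 0" using True by simp
    then have "B - A = {}" using assms(2) by simp
    then have "sum f (B - A) = 0" by (simp only: sum.empty)
    moreover have "sum f (A - B) = 0" using True by (simp only: sum.empty)
    ultimately show ?thesis using sA sB by linarith
  next
    case False
    define M where "M = Max (f ` (A - B))"
    have "sum f (A - B) \<le> of_nat (card (A - B)) * M"
      by (rule sum_bounded_above) (use assms(1) in \<open>auto simp: M_def\<close>)
    moreover have "of_nat (card (B - A)) * M \<le> sum f (B - A)"
    proof (rule sum_bounded_below)
      fix i assume "i \<in> B - A"
      have "M \<in> f ` (A - B)" unfolding M_def using False assms(1) by (intro Max_in) auto
      then show "M \<le> f i" using assms(4) \<open>i \<in> B - A\<close> by auto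
    qed
    ultimately show ?thesis using sA sB cA by simp
  qed
qed

lemma ex_smallest:
  fixes g :: "'y::finite \<Rightarrow> real"
  assumes "1 \<le> k"
  shows "\<exists>J. smallest_set k y g J"
proof -
  define A where "A = {J::'y set. y \<notin> J \<and> card J = card (UNIV::'y set) - k}"
  define f where "f = (\<lambda>J. \<Sum>j\<in>J. exp (g j))"
  have fin: "finite A" by simp
  have "card (UNIV::'y set) - k \<le> card (UNIV - {y})"
    using assms by (simp add: card_Diff_singleton)
  then obtain T where "T \<subseteq> UNIV - {y}" "card T = card (UNIV::'y set) - k"
    by (rule obtain_subset_with_card_n)
  then have ne: "A \<noteq> {}" unfolding A_def by auto
  have "Min (f ` A) \<in> f ` A" by (rule Min_in) (use fin ne in auto)
  then obtain J where JA: "J \<in> A" and Jm: "f J = Min (f ` A)" by auto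
  have Jmin: "f J \<le> f J'" if "J' \<in> A" for J'
    using Jm that fin by simp
  have "\<forall>j\<in>J. \<forall>i. i \<noteq> y \<longrightarrow> i \<notin> J \<longrightarrow> g j \<le> g i"
  proof (intro ballI allI impI, rule ccontr)
    fix j i assume j: "j \<in> J" and iy: "i \<noteq> y" and iJ: "i \<notin> J" and lt: "\<not> g j \<le> g i"
    define J' where "J' = insert i (J - {j})"
    have "card J' = card J" unfolding J'_def using j iJ
      by (cases "card J") (auto simp: card_insert_if card_Diff_singleton)
    then have J'A: "J' \<in> A" using JA iy unfolding A_def J'_def by auto
    have "f J' = f J - exp (g j) + exp (g i)"
      unfolding f_def J'_def using j iJ by (simp add: sum_diff1)
    moreover have "exp (g i) < exp (g j)" using lt by simp
    ultimately show False using Jmin[OF J'A] by linarith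
  qed
  then show ?thesis using JA unfolding A_def smallest_set_def by auto
qed

definition Phi :: "nat \<Rightarrow> 'y::finite \<Rightarrow> ('y \<Rightarrow> real) \<Rightarrow> real" where
  "Phi k y g = (\<Sum>j\<in>(SOME J. smallest_set k y g J). exp (g j - g y))"

lemma loss_Phi: "trunc_topk_loss k y g = ln (1 + Phi k y g)"
  unfolding trunc_topk_loss_def Phi_def ..

lemma Phi_opt:
  fixes g :: "'y::finite \<Rightarrow> real"
  assumes "1 \<le> k"
  obtains J where "y \<notin> J" "card J = card (UNIV::'y set) - k" "Phi k y g = (\<Sum>j\<in>J. exp (g j - g y))"
proof -
  have "smallest_set k y g (SOME J. smallest_set k y g J)"
    using ex_smallest[OF assms] by (rule someI_ex)
  then show ?thesis using that unfolding smallest_set_def Phi_def by auto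
qed

lemma Phi_le:
  fixes g :: "'y::finite \<Rightarrow> real"
  assumes "1 \<le> k" "y \<notin> J" "card J = card (UNIV::'y set) - k"
  shows "Phi k y g \<le> (\<Sum>j\<in>J. exp (g j - g y))"
proof -
  define J0 where "J0 = (SOME J. smallest_set k y g J)"
  have sm: "smallest_set k y g J0"
    using ex_smallest[OF assms(1)] unfolding J0_def by (rule someI_ex)
  have "(\<Sum>j\<in>J0. exp (g j - g y)) \<le> (\<Sum>j\<in>J. exp (g j - g y))"
    by (rule exch_sum) (use sm assms in \<open>auto simp: smallest_set_def\<close>)
  then show ?thesis unfolding Phi_def J0_def .
qed



lemma Phi_gen:
  fixes g g' :: "'y::finite \<Rightarrow> real"
  assumes "1 \<le> k" "c \<ge> 0"
    and "\<And>J. y \<notin> J \<Longrightarrow> card J = card (UNIV::'y set) - k \<Longrightarrow>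
          (\<Sum>j\<in>J. exp (g j - g y)) \<le> c * (\<Sum>j\<in>J. exp (g' j - g' y))"
  shows "Phi k y g \<le> c * Phi k y g'"
proof -
  obtain J where J: "y \<notin> J" "card J = card (UNIV::'y set) - k"
    "Phi k y g' = (\<Sum>j\<in>J. exp (g' j - g' y))"
    using Phi_opt[OF assms(1)] by blast
  have "Phi k y g \<le> (\<Sum>j\<in>J. exp (g j - g y))" by (rule Phi_le) (use assms J in auto)
  also have "\<dots> \<le> c * Phi k y g'" using assms(3)[OF J(1,2)] J(3) by simp
  finally show ?thesis .
qed

lemma Phi_pos:
  fixes g :: "'y::finite \<Rightarrow> real"
  assumes "1 \<le> k" "k < card (UNIV::'y set)"
  shows "0 < Phi k y g"
proof -
  obtain J where J: "y \<notin> J" "card J = card (UNIV::'y set) - k"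
    "Phi k y g = (\<Sum>j\<in>J. exp (g j - g y))"
    using Phi_opt[OF assms(1)] by blast
  have "J \<noteq> {}" using J(2) assms by auto
  then show ?thesis using J(3) by (simp add: sum_pos)
qed

lemma Phi_perm_le:
  fixes g :: "'y::finite \<Rightarrow> real" and \<tau> :: "'y \<Rightarrow> 'y"
  assumes "1 \<le> k" "bij \<tau>"
  shows "Phi k y (g \<circ> \<tau>) \<le> Phi k (\<tau> y) g"
proof -
  obtain J where J: "\<tau> y \<notin> J" "card J = card (UNIV::'y set) - k"
    "Phi k (\<tau> y) g = (\<Sum>j\<in>J. exp (g j - g (\<tau> y)))"
    using Phi_opt[OF assms(1)] by blast
  define J' where "J' = inv \<tau> ` J"
  have inj: "inj \<tau>" using assms(2) by (rule bij_is_inj)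
  have inj2: "inj (inv \<tau>)" using assms(2) by (intro bij_is_inj bij_imp_bij_inv)
  have J'J: "\<tau> ` J' = J" unfolding J'_def using assms(2)
    by (simp add: image_comp bij_is_surj surj_f_inv_f)
  have yJ': "y \<notin> J'"
  proof
    assume "y \<in> J'" then have "\<tau> y \<in> \<tau> ` J'" by (rule imageI)
    then show False using J(1) J'J by simp
  qed
  have cJ': "card J' = card (UNIV::'y set) - k"
    unfolding J'_def using J(2) card_image[OF inj_on_subset[OF inj2, of J]] by simp
  have "Phi k y (g \<circ> \<tau>) \<le> (\<Sum>j\<in>J'. exp ((g \<circ> \<tau>) j - (g \<circ> \<tau>) y))"
    by (rule Phi_le[OF assms(1) yJ' cJ'])
  also have "\<dots> = (\<Sum>j\<in>\<tau> ` J'. exp (g j - g (\<tau> y)))"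
    using sum.reindex[OF inj_on_subset[OF inj, of J'], of "\<lambda>j. exp (g j - g (\<tau> y))"]
    by (simp add: o_def)
  also have "\<dots> = Phi k (\<tau> y) g" unfolding J'J J(3) ..
  finally show ?thesis .
qed

lemma Phi_perm:
  fixes g :: "'y::finite \<Rightarrow> real" and \<tau> :: "'y \<Rightarrow> 'y"
  assumes "1 \<le> k" "bij \<tau>"
  shows "Phi k y (g \<circ> \<tau>) = Phi k (\<tau> y) g"
proof -
  have b: "bij (inv \<tau>)" using assms(2) by (rule bij_imp_bij_inv)
  have "\<tau> \<circ> inv \<tau> = id" using assms(2) surj_iff bij_is_surj by blast
  then have "(g \<circ> \<tau>) \<circ> inv \<tau> = g" by (simp add: comp_assoc)
  then have "Phi k (\<tau> y) g = Phi k (\<tau> y) ((g \<circ> \<tau>) \<circ> inv \<tau>)" by simp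
  also have "\<dots> \<le> Phi k (inv \<tau> (\<tau> y)) (g \<circ> \<tau>)" by (rule Phi_perm_le[OF assms(1) b])
  also have "inv \<tau> (\<tau> y) = y" using inv_f_f[OF bij_is_inj[OF assms(2)]] .
  finally have "Phi k (\<tau> y) g \<le> Phi k y (g \<circ> \<tau>)" .
  then show ?thesis using Phi_perm_le[OF assms, of y g] by linarith
qed

lemma Phi_shift_self:
  fixes g :: "'y::finite \<Rightarrow> real"
  assumes "1 \<le> k"
  shows "Phi k z (g(z := g z + t)) = exp (- t) * Phi k z g"
proof -
  define G where "G = g(z := g z + t)"
  have e: "(\<Sum>j\<in>J. exp (G j - G z)) = exp (-t) * (\<Sum>j\<in>J. exp (g j - g z))"
    if "z \<notin> J" for J
  proof -
    have "(\<Sum>j\<in>J. exp (G j - G z)) = (\<Sum>j\<in>J. exp (-t) * exp (g j - g z))"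
      using that unfolding G_def by (intro sum.cong) (auto simp: exp_add[symmetric])
    then show ?thesis by (simp add: sum_distrib_left)
  qed
  have e2: "(\<Sum>j\<in>J. exp (g j - g z)) = exp t * (\<Sum>j\<in>J. exp (G j - G z))"
    if "z \<notin> J" for J
    using e[OF that] by (simp add: exp_minus_inverse mult.assoc[symmetric])
  have "Phi k z G \<le> exp (-t) * Phi k z g"
    by (rule Phi_gen[OF assms]) (use e in auto)
  moreover have "Phi k z g \<le> exp t * Phi k z G"
    by (rule Phi_gen[OF assms]) (use e2 in auto)
  moreover have "exp (-t) * (exp t * Phi k z G) = Phi k z G"
    by (simp add: exp_minus_inverse mult.assoc[symmetric] exp_add[symmetric])
  moreover have "exp (-t) * Phi k z g \<le> exp (-t) * (exp t * Phi k z G)"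
    using \<open>Phi k z g \<le> exp t * Phi k z G\<close> by (rule mult_left_mono) simp
  ultimately have "Phi k z G = exp (- t) * Phi k z g" by linarith
  then show ?thesis unfolding G_def .
qed

lemma Phi_strict:
  fixes g :: "'y::finite \<Rightarrow> real"
  assumes "1 \<le> k" "k < card (UNIV::'y set)" "i \<noteq> j" "g i < g j"
  shows "Phi k j g < Phi k i g"
proof -
  obtain J where J: "i \<notin> J" "card J = card (UNIV::'y set) - k"
    "Phi k i g = (\<Sum>l\<in>J. exp (g l - g i))"
    using Phi_opt[OF assms(1)] by blast
  have ne: "J \<noteq> {}" using J(2) assms by auto
  show ?thesis
  proof (cases "j \<in> J")
    case False
    then have "Phi k j g \<le> (\<Sum>l\<in>J. exp (g l - g j))" using Phi_le[OF assms(1)] J by blast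
    also have "\<dots> < (\<Sum>l\<in>J. exp (g l - g i))"
      by (rule sum_strict_mono) (use ne assms(4) in auto)
    finally show ?thesis using J(3) by simp
  next
    case True
    define J' where "J' = insert i (J - {j})"
    have cJ': "card J' = card J" unfolding J'_def using True J(1)
      by (cases "card J") (auto simp: card_insert_if card_Diff_singleton)
    have "j \<notin> J'" unfolding J'_def using assms(3) by auto
    then have "Phi k j g \<le> (\<Sum>l\<in>J'. exp (g l - g j))" using Phi_le[OF assms(1)] J cJ' by simp
    also have "\<dots> = (\<Sum>l\<in>J - {j}. exp (g l - g j)) + exp (g i - g j)"
      unfolding J'_def using J(1) by simp
    also have "\<dots> < (\<Sum>l\<in>J - {j}. exp (g l - g i)) + exp (g j - g i)"
    proof -
      have "(\<Sum>l\<in>J - {j}. exp (g l - g j)) \<le> (\<Sum>l\<in>J - {j}. exp (g l - g i))"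
        by (rule sum_mono) (use assms(4) in auto)
      moreover have "exp (g i - g j) < exp (g j - g i)" using assms(4) by simp
      ultimately show ?thesis by linarith
    qed
    also have "\<dots> = Phi k i g" using J(3) True by (simp add: sum_diff1)
    finally show ?thesis .
  qed
qed



lemma Phi_nonneg:
  fixes g :: "'y::finite \<Rightarrow> real"
  assumes "1 \<le> k"
  shows "0 \<le> Phi k y g"
proof -
  obtain J where "Phi k y g = (\<Sum>j\<in>J. exp (g j - g y))"
    using Phi_opt[OF assms] by blast
  then show ?thesis by (simp add: sum_nonneg)
qed

lemma key_ineq:
  fixes b c t :: real
  assumes "0 < c" "0 \<le> b"
  shows "ln (c + b * exp t) + ln (c + b * exp (- t)) \<le> 2 * ln (c + b) + (exp t + exp (- t) - 2) / 4"
proof -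
  define u where "u = exp t"
  define v where "v = exp (- t)"
  have uv: "u * v = 1" unfolding u_def v_def by (simp add: exp_minus_inverse)
  have up: "u > 0" "v > 0" unfolding u_def v_def by auto
  define w where "w = u + v - 2"
  have w0: "w \<ge> 0"
  proof -
    have "0 \<le> (u - 1)^2" by simp
    then have "0 \<le> u * u - 2 * u + u * v" using uv by (simp add: power2_eq_square algebra_simps)
    then have "0 \<le> u * (u + v - 2)" by (simp add: algebra_simps)
    then show ?thesis unfolding w_def using up by (simp add: zero_le_mult_iff)
  qed
  have cb: "c + b > 0" using assms by simp
  have "(c + b*u)*(c+b*v) = c*c + c*b*(u+v) + b*b*(u*v)" by (simp add: algebra_simps)
  also have "\<dots> = (c+b)^2 + c*b*w" unfolding w_def using uv by (simp add: power2_eq_square algebra_simps)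
  also have "\<dots> = (c + b)^2 * (1 + c * b * w / (c + b)^2)" using cb by (simp add: field_simps)
  finally have prod: "(c + b * u) * (c + b * v) = (c + b)^2 * (1 + c * b * w / (c + b)^2)" .
  have pos1: "c + b * u > 0" "c + b * v > 0" using assms up by (auto intro: add_pos_nonneg)
  have r0: "c * b * w / (c + b)^2 \<ge> 0" using assms w0 by simp
  have "ln (c + b * u) + ln (c + b * v) = ln ((c + b * u) * (c + b * v))"
    using pos1 by (simp add: ln_mult)
  also have "\<dots> = ln ((c + b)^2) + ln (1 + c * b * w / (c + b)^2)"
    unfolding prod using cb r0 by (simp add: ln_mult)
  also have "ln ((c + b)^2) = 2 * ln (c + b)" using cb by (simp add: ln_realpow)
  also have "ln (1 + c * b * w / (c + b)^2) \<le> c * b * w / (c + b)^2"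
    using ln_le_minus_one[of "1 + c * b * w / (c + b)^2"] r0 by simp
  also have "c * b * w / (c + b)^2 \<le> w / 4"
  proof -
    have "4 * (c * b) \<le> (c + b)^2" using sum_squares_ge_zero[of "c - b" 0]
      by (simp add: power2_eq_square algebra_simps)
    then have "4 * (c * b) * w \<le> (c + b)^2 * w" using w0 by (simp add: mult_right_mono)
    then show ?thesis using cb by (simp add: field_simps)
  qed
  finally show ?thesis unfolding u_def v_def w_def by simp
qed

definition FF :: "nat \<Rightarrow> ('y::finite \<Rightarrow> real) \<Rightarrow> ('y \<Rightarrow> real) \<Rightarrow> real" where
  "FF k p g = (\<Sum>y\<in>UNIV. p y * ln (1 + Phi k y g))"

definition sw :: "'a \<Rightarrow> 'a \<Rightarrow> 'a \<Rightarrow> 'a" where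
  "sw a b x = (if x = a then b else if x = b then a else x)"

lemma sw_sw: "sw a b (sw a b x) = x" unfolding sw_def by auto

lemma bij_sw: "bij (sw a b)"
  by (rule bij_betw_byWitness[where f'="sw a b"]) (auto simp: sw_sw)

lemma FF_swap:
  fixes g :: "'y::finite \<Rightarrow> real"
  assumes "1 \<le> k" "a \<noteq> b"
  shows "FF k p (g \<circ> sw a b) - FF k p g
     = (p a - p b) * (ln (1 + Phi k b g) - ln (1 + Phi k a g))"
proof -
  define L where "L x = ln (1 + Phi k x g)" for x
  define h where "h x = p (sw a b x) * L x" for x
  have "FF k p (g \<circ> sw a b) = (\<Sum>y\<in>UNIV. h (sw a b y))"
    unfolding FF_def h_def L_def by (simp add: Phi_perm[OF assms(1) bij_sw] sw_sw)
  also have "\<dots> = sum h UNIV" by (rule sum.reindex_bij_betw) (rule bij_sw)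
  finally have e: "FF k p (g \<circ> sw a b) - FF k p g = (\<Sum>x\<in>UNIV. h x - p x * L x)"
    unfolding FF_def L_def by (simp add: sum_subtractf)
  also have "\<dots> = (\<Sum>x\<in>{a,b}. h x - p x * L x)"
    by (rule sum.mono_neutral_right) (auto simp: h_def sw_def)
  also have "\<dots> = (p a - p b) * (L b - L a)"
    using assms(2) by (simp add: h_def sw_def algebra_simps)
  finally show ?thesis unfolding L_def .
qed

lemma L_conc:
  fixes g :: "'y::finite \<Rightarrow> real"
  assumes "1 \<le> k"
  shows "ln (1 + Phi k i (g(z := g z + t))) + ln (1 + Phi k i (g(z := g z + - t)))
         \<le> 2 * ln (1 + Phi k i g) + (exp t + exp (- t) - 2) / 4"
proof (cases "i = z")
  case True
  define X where "X = Phi k z g"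
  have X: "0 \<le> X" unfolding X_def by (rule Phi_nonneg[OF assms])
  have e1: "Phi k z (g(z := g z + t)) = exp (- t) * X" unfolding X_def by (rule Phi_shift_self[OF assms])
  have e2: "Phi k z (g(z := g z + - t)) = exp t * X" unfolding X_def
    using Phi_shift_self[OF assms, of z g "-t"] by simp
  have K0: "ln (1 + X * exp t) + ln (1 + X * exp (- t)) \<le> 2 * ln (1 + X) + (exp t + exp (- t) - 2) / 4"
    using key_ineq[of 1 X t] X by simp
  have c1: "exp (- t) * X = X * exp (- t)" "exp t * X = X * exp t" by simp_all
  show ?thesis unfolding True e1 e2 c1 X_def[symmetric] using K0 by linarith
next
  case False
  obtain J where J: "i \<notin> J" "card J = card (UNIV::'y set) - k"
    "Phi k i g = (\<Sum>j\<in>J. exp (g j - g i))"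
    using Phi_opt[OF assms] by blast
  define a where "a = (\<Sum>j\<in>J - {z}. exp (g j - g i))"
  define b where "b = (if z \<in> J then exp (g z - g i) else 0)"
  have a0: "0 \<le> a" unfolding a_def by (simp add: sum_nonneg)
  have b0: "0 \<le> b" unfolding b_def by simp
  have S: "(\<Sum>j\<in>J. exp ((g(z := g z + s)) j - (g(z := g z + s)) i)) = a + b * exp s" for s
  proof (cases "z \<in> J")
    case True
    have "(\<Sum>j\<in>J. exp ((g(z := g z + s)) j - (g(z := g z + s)) i))
        = exp (g z + s - g i) + (\<Sum>j\<in>J - {z}. exp ((g(z := g z + s)) j - (g(z := g z + s)) i))"
      using True False by (simp add: sum.remove)
    also have "(\<Sum>j\<in>J - {z}. exp ((g(z := g z + s)) j - (g(z := g z + s)) i)) = a"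
      unfolding a_def using False by (intro sum.cong) auto
    finally show ?thesis using True unfolding b_def
      by (simp add: exp_add[symmetric] algebra_simps)
  next
    case f2: False
    then have "J - {z} = J" by auto
    then show ?thesis unfolding a_def b_def using False f2
      by (simp, intro sum.cong) auto
  qed
  have P0: "Phi k i g = a + b"
    using S[of 0] by (simp add: J(3))
  have bound: "ln (1 + Phi k i (g(z := g z + s))) \<le> ln (1 + a + b * exp s)" for s
  proof -
    have "Phi k i (g(z := g z + s)) \<le> a + b * exp s"
      using Phi_le[OF assms J(1,2), of "g(z := g z + s)"] S[of s] by simp
    moreover have "0 \<le> Phi k i (g(z := g z + s))" by (rule Phi_nonneg[OF assms])
    ultimately show ?thesis by simp
  qed
  have "ln (1 + a + b * exp t) + ln (1 + a + b * exp (- t)) \<le> 2 * ln (1 + a + b) + (exp t + exp (- t) - 2) / 4"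
    using key_ineq[of "1 + a" b t] a0 b0 by (simp add: add.assoc)
  then show ?thesis using bound[of t] bound[of "-t"] P0 by (simp add: add.assoc)
qed

lemma FF_conc:
  fixes g :: "'y::finite \<Rightarrow> real"
  assumes "1 \<le> k" "\<And>y. p y \<ge> 0" "sum p UNIV = 1"
  shows "FF k p (g(z := g z + t)) + FF k p (g(z := g z + - t)) \<le> 2 * FF k p g + (exp t + exp (- t) - 2) / 4"
proof -
  have "FF k p (g(z := g z + t)) + FF k p (g(z := g z + - t))
      = (\<Sum>y\<in>UNIV. p y * (ln (1 + Phi k y (g(z := g z + t))) + ln (1 + Phi k y (g(z := g z + - t)))))"
    unfolding FF_def by (simp add: sum.distrib algebra_simps)
  also have "\<dots> \<le> (\<Sum>y\<in>UNIV. p y * (2 * ln (1 + Phi k y g) + (exp t + exp (- t) - 2) / 4))"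
    by (rule sum_mono, rule mult_left_mono) (use L_conc[OF assms(1)] assms(2) in auto)
  also have "\<dots> = 2 * FF k p g + (exp t + exp (- t) - 2) / 4 * sum p UNIV"
  proof -
    define q where "q = (exp t + exp (- t) - 2) / 4"
    define L where "L y = ln (1 + Phi k y g)" for y
    have "(\<Sum>y\<in>UNIV. p y * (2 * L y + q)) = (\<Sum>y\<in>UNIV. 2 * (p y * L y) + q * p y)"
      by (intro sum.cong) (simp_all add: algebra_simps)
    also have "\<dots> = 2 * (\<Sum>y\<in>UNIV. p y * L y) + q * sum p UNIV"
      by (simp add: sum.distrib sum_distrib_left)
    finally show ?thesis unfolding FF_def q_def[symmetric] L_def[symmetric] by (simp add: mult.commute)
  qed
  finally show ?thesis using assms(3) by simp
qed



lemma exists_t: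
  fixes c X :: real
  assumes "0 < c" "0 < X"
  shows "\<exists>t>0. (exp t + exp (- t) - 2) / 2 < c * (ln (1 + exp t * X) - ln (1 + exp (- t) * X))"
proof -
  define f where "f t = c * (ln (1 + exp t * X) - ln (1 + exp (- t) * X)) - (exp t + exp (- t) - 2) / 2" for t
  have d: "(f has_real_derivative (c * (X / (1 + X) + X / (1 + X)))) (at 0)"
    unfolding f_def using assms
    apply (auto intro!: derivative_eq_intros simp: field_simps add_pos_pos)
    apply (simp add: divide_simps)
    apply (simp add: algebra_simps)
    done
  have "0 < c * (X / (1 + X) + X / (1 + X))" using assms by simp
  from DERIV_pos_inc_right[OF d this] obtain d where "d > 0" "\<And>h. 0 < h \<Longrightarrow> h < d \<Longrightarrow> f 0 < f (0 + h)"
    by blast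
  then have "f 0 < f (d / 2)" by simp
  moreover have "f 0 = 0" unfolding f_def by simp
  ultimately show ?thesis using \<open>d > 0\<close> unfolding f_def by (intro exI[of _ "d/2"]) auto
qed



lemma min_mono:
  fixes g :: "'y::finite \<Rightarrow> real"
  assumes k: "1 \<le> k" "k < card (UNIV::'y set)"
    and gmin: "\<And>g'. FF k p g \<le> FF k p g'"
    and pij: "p i > p j"
  shows "g j \<le> g i"
proof (rule ccontr)
  assume "\<not> g j \<le> g i"
  then have lt: "g i < g j" by simp
  have ij: "i \<noteq> j" using pij by auto
  have "Phi k j g < Phi k i g" by (rule Phi_strict[OF k ij lt])
  then have "ln (1 + Phi k j g) < ln (1 + Phi k i g)"
    using Phi_nonneg[OF k(1), of j g] by simp
  then have "FF k p (g \<circ> sw i j) - FF k p g < 0"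
    unfolding FF_swap[OF k(1) ij] using pij by (simp add: mult_pos_neg)
  then show False using gmin[of "g \<circ> sw i j"] by simp
qed

lemma min_tie:
  fixes g :: "'y::finite \<Rightarrow> real"
  assumes k: "1 \<le> k" "k < card (UNIV::'y set)"
    and p: "\<And>y. p y \<ge> 0" "sum p UNIV = 1"
    and gmin: "\<And>g'. FF k p g \<le> FF k p g'"
    and yj: "y \<noteq> j" "g y = g j" "p y > p j"
  shows False
proof -
  define X where "X = Phi k y g"
  have X0: "0 < X" unfolding X_def by (rule Phi_pos[OF k])
  define c where "c = p y - p j"
  have c0: "0 < c" unfolding c_def using yj by simp
  obtain t where t0: "t > 0" and tt: "(exp t + exp (- t) - 2) / 2 < c * (ln (1 + exp t * X) - ln (1 + exp (- t) * X))"
    using exists_t[OF c0 X0] by blast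
  define G1 where "G1 = g(y := g y + t)"
  define G2 where "G2 = g(y := g y + - t)"
  define H1 where "H1 = g(j := g j + t)"
  define H2 where "H2 = g(j := g j + - t)"
  have H1G1: "H1 = G1 \<circ> sw y j" unfolding H1_def G1_def sw_def using yj by (auto simp: fun_eq_iff)
  have G2H2: "G2 = H2 \<circ> sw y j" unfolding H2_def G2_def sw_def using yj by (auto simp: fun_eq_iff)
  have gsw: "g \<circ> sw y j = g" using yj by (auto simp: fun_eq_iff sw_def)
  have Xj: "Phi k j g = X"
    using Phi_perm[OF k(1) bij_sw, of y g y j] gsw unfolding X_def by (simp add: sw_def)
  have gap1: "FF k p H1 - FF k p G1 = c * (ln (1 + Phi k j G1) - ln (1 + Phi k y G1))"
    unfolding H1G1 FF_swap[OF k(1) yj(1)] c_def ..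
  have gap2: "FF k p G2 - FF k p H2 = c * (ln (1 + Phi k j H2) - ln (1 + Phi k y H2))"
    unfolding G2H2 FF_swap[OF k(1) yj(1)] c_def ..
  have "Phi k y G1 = exp (- t) * X" unfolding G1_def X_def by (rule Phi_shift_self[OF k(1)])
  have "Phi k j H2 = exp t * X" unfolding H2_def Xj[symmetric] using Phi_shift_self[OF k(1), of j g "-t"] by simp
  have "Phi k j g \<le> 1 * Phi k j G1"
  proof (rule Phi_gen[OF k(1)])
    fix J :: "'y set" assume "j \<notin> J"
    show "(\<Sum>l\<in>J. exp (g l - g j)) \<le> 1 * (\<Sum>l\<in>J. exp (G1 l - G1 j))"
      using yj(1) t0 unfolding G1_def by (simp, intro sum_mono) auto
  qed simp
  then have A1: "ln (1 + X) \<le> ln (1 + Phi k j G1)" using Xj X0 by simp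
  have "Phi k y H2 \<le> 1 * Phi k y g"
  proof (rule Phi_gen[OF k(1)])
    fix J :: "'y set" assume "y \<notin> J"
    show "(\<Sum>l\<in>J. exp (H2 l - H2 y)) \<le> 1 * (\<Sum>l\<in>J. exp (g l - g y))"
      using yj(1) t0 unfolding H2_def by (simp, intro sum_mono) auto
  qed simp
  then have A2: "ln (1 + Phi k y H2) \<le> ln (1 + X)" using X0 Phi_nonneg[OF k(1), of y H2] unfolding X_def by simp
  have g1: "c * (ln (1 + X) - ln (1 + exp (- t) * X)) \<le> FF k p H1 - FF k p G1"
    unfolding gap1 using A1 c0 \<open>Phi k y G1 = exp (- t) * X\<close> by (simp add: mult_left_mono)
  have g2: "c * (ln (1 + exp t * X) - ln (1 + X)) \<le> FF k p G2 - FF k p H2"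
    unfolding gap2 using A2 c0 \<open>Phi k j H2 = exp t * X\<close> by (simp add: mult_left_mono)
  have cy: "FF k p G1 + FF k p G2 \<le> 2 * FF k p g + (exp t + exp (- t) - 2) / 4"
    unfolding G1_def G2_def by (rule FF_conc[OF k(1) p])
  have cj: "FF k p H1 + FF k p H2 \<le> 2 * FF k p g + (exp t + exp (- t) - 2) / 4"
    unfolding H1_def H2_def by (rule FF_conc[OF k(1) p])
  have m: "FF k p g \<le> FF k p G1" "FF k p g \<le> FF k p G2" "FF k p g \<le> FF k p H1" "FF k p g \<le> FF k p H2"
    using gmin by auto
  have "c * (ln (1 + exp t * X) - ln (1 + exp (- t) * X))
      = c * (ln (1 + X) - ln (1 + exp (- t) * X)) + c * (ln (1 + exp t * X) - ln (1 + X))"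
    by (simp add: algebra_simps)
  then show False using tt g1 g2 cy cj m by linarith
qed

lemma min_order:
  fixes g :: "'y::finite \<Rightarrow> real"
  assumes k: "1 \<le> k" "k < card (UNIV::'y set)"
    and p: "\<And>y. p y \<ge> 0" "sum p UNIV = 1" "inj p"
    and gmin: "\<And>g'. FF k p g \<le> FF k p g'"
    and ij: "i \<noteq> j"
  shows "g i \<le> g j \<longleftrightarrow> p i < p j"
proof -
  have pne: "p i \<noteq> p j" using p(3) ij by (auto dest: injD)
  have gne: "g i \<noteq> g j"
  proof
    assume e: "g i = g j"
    show False
    proof (cases "p i > p j")
      case True then show False using min_tie[OF k p(1,2) gmin ij e] by blast
    next
      case False then have "p j > p i" using pne by simp
      then show False using min_tie[OF k p(1,2) gmin ij[symmetric] e[symmetric]] by blast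
    qed
  qed
  show ?thesis
  proof
    assume "g i \<le> g j"
    then have "g i < g j" using gne by simp
    show "p i < p j"
    proof (rule ccontr)
      assume "\<not> p i < p j"
      then have "p i > p j" using pne by simp
      then have "g j \<le> g i" by (rule min_mono[OF k gmin])
      then show False using \<open>g i < g j\<close> by simp
    qed
  next
    assume "p i < p j"
    then show "g i \<le> g j" by (rule min_mono[OF k gmin])
  qed
qed



definition TT :: "nat \<Rightarrow> ('y::finite \<Rightarrow> real) \<Rightarrow> 'y set" where
  "TT s h = {y. \<not> s \<le> card {j. j \<noteq> y \<and> h y \<le> h j}}"

lemma err_sum:
  fixes p :: "'y::finite \<Rightarrow> real"
  assumes "sum p UNIV = 1"
  shows "(\<Sum>y\<in>UNIV. p y * top_err s y h) = 1 - sum p (TT s h)"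
proof -
  have "(\<Sum>y\<in>UNIV. p y * top_err s y h) = (\<Sum>y\<in>UNIV. if y \<in> TT s h then 0 else p y)"
    by (intro sum.cong) (auto simp: top_err_def TT_def)
  also have "\<dots> = sum p (UNIV - TT s h)" by (simp add: sum.If_cases Compl_eq_Diff_UNIV)
  also have "\<dots> = sum p UNIV - sum p (TT s h)" by (simp add: sum_diff)
  finally show ?thesis using assms by simp
qed

lemma card_TT:
  fixes h :: "'y::finite \<Rightarrow> real"
  shows "card (TT s h) \<le> s"
proof (rule ccontr)
  assume a: "\<not> card (TT s h) \<le> s"
  then have ne: "TT s h \<noteq> {}" by auto
  have "Min (h ` TT s h) \<in> h ` TT s h" by (rule Min_in) (use ne in auto)
  then obtain y where y: "y \<in> TT s h" "h y = Min (h ` TT s h)" by auto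
  have "TT s h - {y} \<subseteq> {j. j \<noteq> y \<and> h y \<le> h j}" using y by auto
  then have "card (TT s h - {y}) \<le> card {j. j \<noteq> y \<and> h y \<le> h j}" by (intro card_mono) auto
  moreover have "card (TT s h - {y}) = card (TT s h) - 1" using y by simp
  ultimately have "s \<le> card {j. j \<noteq> y \<and> h y \<le> h j}" using a by linarith
  then show False using y unfolding TT_def by auto
qed

lemma TT_sep:
  fixes p :: "'y::finite \<Rightarrow> real"
  assumes "inj p" "z \<in> TT s p" "x \<notin> TT s p"
  shows "p x < p z"
proof (rule ccontr)
  assume "\<not> p x < p z"
  then have le: "p z \<le> p x" by simp
  have xz: "x \<noteq> z" using assms by auto
  have "insert x {j. j \<noteq> x \<and> p x \<le> p j} \<subseteq> {j. j \<noteq> z \<and> p z \<le> p j}"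
  proof
    fix j assume "j \<in> insert x {j. j \<noteq> x \<and> p x \<le> p j}"
    then show "j \<in> {j. j \<noteq> z \<and> p z \<le> p j}"
    proof
      assume "j = x" then show ?thesis using xz le by auto
    next
      assume j: "j \<in> {j. j \<noteq> x \<and> p x \<le> p j}"
      have "j \<noteq> z"
      proof
        assume "j = z" then have "p x = p z" using j le by auto
        then show False using xz assms(1) by (auto dest: injD)
      qed
      then show ?thesis using j le by auto
    qed
  qed
  then have "card (insert x {j. j \<noteq> x \<and> p x \<le> p j}) \<le> card {j. j \<noteq> z \<and> p z \<le> p j}"
    by (intro card_mono) auto
  moreover have "card (insert x {j. j \<noteq> x \<and> p x \<le> p j}) = Suc (card {j. j \<noteq> x \<and> p x \<le> p j})"
    by simp
  moreover have "s \<le> card {j. j \<noteq> x \<and> p x \<le> p j}" using assms(3) unfolding TT_def by auto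
  moreover have "\<not> s \<le> card {j. j \<noteq> z \<and> p z \<le> p j}" using assms(2) unfolding TT_def by auto
  ultimately show False by linarith
qed

lemma card_S:
  fixes p :: "'y::finite \<Rightarrow> real"
  assumes "inj p" "s \<le> card (UNIV::'y set)"
  shows "s \<le> card (TT s p)"
proof (rule ccontr)
  assume a: "\<not> s \<le> card (TT s p)"
  have "UNIV - TT s p \<noteq> {}"
  proof
    assume "UNIV - TT s p = {}"
    then have "TT s p = UNIV" by auto
    then show False using a assms(2) by simp
  qed
  then have "Max (p ` (UNIV - TT s p)) \<in> p ` (UNIV - TT s p)" by (intro Max_in) auto
  then obtain x where x: "x \<notin> TT s p" "p x = Max (p ` (UNIV - TT s p))" by auto
  have "{j. j \<noteq> x \<and> p x \<le> p j} \<subseteq> TT s p"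
  proof
    fix j assume j: "j \<in> {j. j \<noteq> x \<and> p x \<le> p j}"
    show "j \<in> TT s p"
    proof (rule ccontr)
      assume "j \<notin> TT s p"
      then have "p j \<le> p x" using x by simp
      then have "p j = p x" using j by simp
      then show False using j assms(1) by (auto dest: injD)
    qed
  qed
  then have "card {j. j \<noteq> x \<and> p x \<le> p j} \<le> card (TT s p)" by (intro card_mono) auto
  then have "\<not> s \<le> card {j. j \<noteq> x \<and> p x \<le> p j}" using a by linarith
  then show False using x unfolding TT_def by auto
qed

lemma top_opt:
  fixes p :: "'y::finite \<Rightarrow> real"
  assumes "inj p" "\<And>y. p y \<ge> 0" "s \<le> card (UNIV::'y set)" "card A \<le> s"
  shows "sum p A \<le> sum p (TT s p)"
proof -
  define S where "S = TT s p"
  have cS: "card A \<le> card S" using card_S[OF assms(1,3)] assms(4) unfolding S_def by linarith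
  have cd: "card (A - S) \<le> card (S - A)"
  proof -
    have "card (A - S) = card A - card (A \<inter> S)" by (simp add: card_Diff_subset_Int)
    moreover have "card (S - A) = card S - card (A \<inter> S)"
      by (simp add: card_Diff_subset_Int inf_commute)
    ultimately show ?thesis using cS by linarith
  qed
  have sA: "sum p A = sum p (A \<inter> S) + sum p (A - S)"
    by (rule sum.Int_Diff) simp
  have sS: "sum p S = sum p (A \<inter> S) + sum p (S - A)"
    using sum.Int_Diff[of S p A] Int_commute[of A S] by (simp only: finite)
  have "sum p (A - S) \<le> sum p (S - A)"
  proof (cases "A - S = {}")
    case True
    have "0 \<le> sum p (S - A)" using assms(2) by (simp add: sum_nonneg)
    then show ?thesis unfolding True by simp
  next
    case False
    define M where "M = Max (p ` (A - S))"
    have Min: "M \<in> p ` (A - S)" unfolding M_def using False by (intro Max_in) auto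
    have M0: "0 \<le> M" using Min assms(2) by auto
    have "sum p (A - S) \<le> of_nat (card (A - S)) * M"
      by (rule sum_bounded_above) (auto simp: M_def)
    also have "\<dots> \<le> of_nat (card (S - A)) * M" using cd M0 by (simp add: mult_right_mono)
    also have "\<dots> \<le> sum p (S - A)"
    proof (rule sum_bounded_below)
      fix i assume "i \<in> S - A"
      then show "M \<le> p i" using Min TT_sep[OF assms(1)] unfolding S_def by (auto intro: less_imp_le)
    qed
    finally show ?thesis .
  qed
  then show ?thesis using sA sS unfolding S_def by linarith
qed



theorem proposition9:
  fixes k s :: nat
  assumes "card (UNIV :: 'y::finite set) \<ge> 2"
    and "1 \<le> k" and "k \<le> card (UNIV :: 'y set)"
    and "k \<le> s" and "s \<le> card (UNIV :: 'y set)"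
  shows "top_calibrated s (trunc_topk_loss k :: 'y \<Rightarrow> ('y \<Rightarrow> real) \<Rightarrow> real)"
  unfolding top_calibrated_def
proof (intro allI impI subsetI)
  fix p :: "'y \<Rightarrow> real" and g
  assume pa: "(\<forall>y. 0 \<le> p y) \<and> sum p UNIV = 1 \<and> inj p"
  then have p0: "\<And>y. 0 \<le> p y" and p1: "sum p UNIV = 1" and pi: "inj p" by auto
  assume gin: "g \<in> argmins (\<lambda>g. \<Sum>y\<in>UNIV. p y * trunc_topk_loss k y g)"
  show "g \<in> argmins (\<lambda>g. \<Sum>y\<in>UNIV. p y * top_err s y g)"
  proof (cases "s = card (UNIV :: 'y set)")
    case True
    have "top_err s y h = 0" for y and h :: "'y \<Rightarrow> real"
    proof -
      have "card {j. j \<noteq> y \<and> h y \<le> h j} \<le> card (UNIV - {y})" by (intro card_mono) auto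
      then have "card {j. j \<noteq> y \<and> h y \<le> h j} < s" using True assms(1)
        by (simp add: card_Diff_singleton)
      then show ?thesis unfolding top_err_def by auto
    qed
    then show ?thesis unfolding argmins_def by simp
  next
    case False
    then have k: "1 \<le> k" "k < card (UNIV :: 'y set)" using assms by auto
    have gmin: "FF k p g \<le> FF k p g'" for g'
      using gin unfolding argmins_def FF_def by (simp add: loss_Phi)
    have Teq: "TT s g = TT s p"
    proof -
      have "{j. j \<noteq> y \<and> g y \<le> g j} = {j. j \<noteq> y \<and> p y \<le> p j}" for y
      proof -
        have "j \<noteq> y \<Longrightarrow> (g y \<le> g j) = (p y \<le> p j)" for j
        proof -
          assume jy: "j \<noteq> y"
          then have "p y \<noteq> p j" using pi by (auto dest: injD)
          then show ?thesis using min_order[OF k p0 p1 pi gmin, of y j] jy by auto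
        qed
        then show ?thesis by auto
      qed
      then show ?thesis unfolding TT_def by simp
    qed
    show ?thesis unfolding argmins_def
    proof (intro CollectI allI)
      fix g' :: "'y \<Rightarrow> real"
      have "sum p (TT s g') \<le> sum p (TT s p)"
        by (rule top_opt[OF pi p0 assms(5) card_TT])
      then show "(\<Sum>y\<in>UNIV. p y * top_err s y g) \<le> (\<Sum>y\<in>UNIV. p y * top_err s y g')"
        unfolding err_sum[OF p1] Teq by simp
    qed
  qed
qed


end
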